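(* Let $y,z$ be nonzero complex numbers and let $u_n=u_n(y,z)$, $v_n=v_n(y,z)$ be the Lucas sequences of the first and second kind. Let $x,r\in\mathbb{C}$ and let $c,n$ be integers with $n\ge c$; if $c<0$ assume moreover $r\neq 0$. Then \[ \sum_{k=c}^n(-1)^k x^{n-k}r^k\big(r v_{k+1}(y,z)+(xy+2rz)u_k(y,z)\big)=(-1)^n y\,r^{n+1}u_{n+1}(y,z)+(-1)^c r^c y\,x^{n-c+1}u_c(y,z) \] and \[ \sum_{k=c}^n(-1)^k x^{n-k}r^k\big((y^2-4z)r\,u_{k+1}(y,z)+(xy+2rz)v_k(y,z)\big)=(-1)^n y\,r^{n+1}v_{n+1}(y,z)+(-1)^c r^c y\,x^{n-c+1}v_c(y,z). \]
   Context: For nonzero complex numbers $y,z$, the Lucas sequences $u_n(y,z)$ and $v_n(y,z)$ are defined by $u_0=0$, $u_1=1$, $v_0=2$, $v_1=y$ and $w_n=y\,w_{n-1}-z\,w_{n-2}$ for $n\ge 2$ (for $w=u$ and $w=v$), and extended to negative indices by $u_{-n}(y,z)=-u_n(y,z)/z^n$ and $v_{-n}(y,z)=v_n(y,z)/z^n$. *)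

theory Defs
  imports Complex_Main
begin

fun lucas_u_nat :: "complex \<Rightarrow> complex \<Rightarrow> nat \<Rightarrow> complex" where
  "lucas_u_nat y z 0 = 0"
| "lucas_u_nat y z (Suc 0) = 1"
| "lucas_u_nat y z (Suc (Suc n)) = y * lucas_u_nat y z (Suc n) - z * lucas_u_nat y z n"

fun lucas_v_nat :: "complex \<Rightarrow> complex \<Rightarrow> nat \<Rightarrow> complex" where
  "lucas_v_nat y z 0 = 2"
| "lucas_v_nat y z (Suc 0) = y"
| "lucas_v_nat y z (Suc (Suc n)) = y * lucas_v_nat y z (Suc n) - z * lucas_v_nat y z n"

definition lucas_u :: "complex \<Rightarrow> complex \<Rightarrow> int \<Rightarrow> complex" where
  "lucas_u y z k = (if 0 \<le> k then lucas_u_nat y z (nat k)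
                    else - lucas_u_nat y z (nat (-k)) / z ^ nat (-k))"

definition lucas_v :: "complex \<Rightarrow> complex \<Rightarrow> int \<Rightarrow> complex" where
  "lucas_v y z k = (if 0 \<le> k then lucas_v_nat y z (nat k)
                    else lucas_v_nat y z (nat (-k)) / z ^ nat (-k))"

end

theory Submission
  imports Defs
begin

lemma u_neg: "lucas_u y z (- int n) = (if n = 0 then 0 else - lucas_u_nat y z n / z ^ n)"
  by (simp add: lucas_u_def)
lemma v_neg: "lucas_v y z (- int n) = lucas_v_nat y z n / z ^ n"
  unfolding lucas_v_def by simp

lemma u_rec:
  assumes z: "z \<noteq> 0"
  shows "lucas_u y z (k + 2) = y * lucas_u y z (k + 1) - z * lucas_u y z k"
proof (cases "k \<ge> 0")
  case True
  then obtain m where k: "k = int m" by (metis nonneg_eq_int)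
  have "nat (int m + 2) = Suc (Suc m)" "nat (int m + 1) = Suc m" by auto
  then show ?thesis using k by (simp add: lucas_u_def)
next
  case False
  show ?thesis
  proof (cases "k = -1")
    case True then show ?thesis using z by (simp add: lucas_u_def)
  next
    case False2: False
    with False have "k \<le> -2" by simp
    define m where "m = nat (-k-2)"
    have e: "k + 2 = - int m" "k + 1 = - int (Suc m)" "k = - int (Suc (Suc m))"
      using \<open>k \<le> -2\<close> by (auto simp: m_def)
    let ?u = "lucas_u_nat y z"
    have r: "?u (Suc (Suc (Suc m))) = y * ?u (Suc (Suc m)) - z * ?u (Suc m)" by simp
    have p: "z ^ Suc (Suc m) = z * z ^ Suc m" "z ^ Suc (Suc (Suc m)) = z * z * z ^ Suc m" by simp_all
    have zz: "z ^ Suc m \<noteq> 0" using z by simp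
    show ?thesis
    proof (cases m)
      case 0 then have "k = -2" using e by simp
      then show ?thesis using z by (simp add: lucas_u_def field_simps numeral_2_eq_2 power2_eq_square)
    next
      case (Suc j)
      have X: "- ?u m / z ^ m = y * (- ?u (Suc m) / z ^ Suc m) - z * (- ?u (Suc (Suc m)) / z ^ Suc (Suc m))"
        using z zz Suc by (simp add: field_simps power_Suc)
      have A: "lucas_u y z (k+2) = - ?u m / z ^ m" unfolding e(1) u_neg using Suc by simp
      have B: "lucas_u y z (k+1) = - ?u (Suc m) / z ^ Suc m" unfolding e(2) u_neg by simp
      have C: "lucas_u y z k = - ?u (Suc (Suc m)) / z ^ Suc (Suc m)" unfolding e(3) u_neg by simp
      show ?thesis unfolding A B C by (rule X)
    qed
  qed
qed
lemma v_rec: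
  assumes z: "z \<noteq> 0"
  shows "lucas_v y z (k + 2) = y * lucas_v y z (k + 1) - z * lucas_v y z k"
proof (cases "k \<ge> 0")
  case True
  then obtain m where k: "k = int m" by (metis nonneg_eq_int)
  have "nat (int m + 2) = Suc (Suc m)" "nat (int m + 1) = Suc m" by auto
  then show ?thesis using k by (simp add: lucas_v_def)
next
  case False
  show ?thesis
  proof (cases "k = -1")
    case True then show ?thesis using z by (simp add: lucas_v_def)
  next
    case False2: False
    with False have "k \<le> -2" by simp
    define m where "m = nat (-k-2)"
    have e: "k + 2 = - int m" "k + 1 = - int (Suc m)" "k = - int (Suc (Suc m))"
      using \<open>k \<le> -2\<close> by (auto simp: m_def)
    let ?v = "lucas_v_nat y z"
    have r: "?v (Suc (Suc (Suc m))) = y * ?v (Suc (Suc m)) - z * ?v (Suc m)" by simp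
    have p: "z ^ Suc (Suc m) = z * z ^ Suc m" "z ^ Suc (Suc (Suc m)) = z * z * z ^ Suc m" by simp_all
    have zz: "z ^ Suc m \<noteq> 0" using z by simp
    show ?thesis
    proof (cases m)
      case 0 then have "k = -2" using e by simp
      then show ?thesis using z by (simp add: lucas_v_def field_simps numeral_2_eq_2 power2_eq_square)
    next
      case (Suc j)
      have X: "?v m / z ^ m = y * (?v (Suc m) / z ^ Suc m) - z * (?v (Suc (Suc m)) / z ^ Suc (Suc m))"
        using z zz Suc by (simp add: field_simps power_Suc)
      have A: "lucas_v y z (k+2) = ?v m / z ^ m" unfolding e(1) v_neg by simp
      have B: "lucas_v y z (k+1) = ?v (Suc m) / z ^ Suc m" unfolding e(2) v_neg by simp
      have C: "lucas_v y z k = ?v (Suc (Suc m)) / z ^ Suc (Suc m)" unfolding e(3) v_neg by simp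
      show ?thesis unfolding A B C by (rule X)
    qed
  qed
qed

lemma rec_unique:
  fixes f g :: "int \<Rightarrow> complex"
  assumes z: "z \<noteq> 0"
    and rf: "\<And>k. f (k+2) = y * f (k+1) - z * f k"
    and rg: "\<And>k. g (k+2) = y * g (k+1) - z * g k"
    and b0: "f 0 = g 0" and b1: "f 1 = g 1"
  shows "f k = g k"
proof -
  define h where "h k = f k - g k" for k
  have rh: "h (k+2) = y * h (k+1) - z * h k" for k
    unfolding h_def rf[of k] rg[of k] by (simp add: algebra_simps)
  have fw: "h (int n) = 0 \<and> h (int n + 1) = 0" for n
  proof (induction n)
    case 0 then show ?case using b0 b1 by (simp add: h_def)
  next
    case (Suc n)
    have "h (int n + 2) = 0" using rh[of "int n"] Suc by simp
    moreover have "int n + 2 = int (Suc n) + 1" by simp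
    ultimately show ?case using Suc by (metis add.commute of_nat_Suc)
  qed
  have bw: "h (- int n) = 0 \<and> h (- int n + 1) = 0" for n
  proof (induction n)
    case 0 then show ?case using b0 b1 by (simp add: h_def)
  next
    case (Suc n)
    have e: "- int n - 1 + 2 = - int n + 1" "- int n - 1 + 1 = - int n" by simp_all
    have "h (- int n + 1) = y * h (- int n) - z * h (- int n - 1)" using rh[of "- int n - 1"] unfolding e .
    then have "z * h (- int n - 1) = 0" using Suc by simp
    then have "h (- int n - 1) = 0" using z by simp
    moreover have "- int (Suc n) = - int n - 1" "- int (Suc n) + 1 = - int n" by simp_all
    ultimately show ?case using Suc by (metis diff_minus_eq_add minus_diff_eq)
  qed
  have "h k = 0"
  proof (cases "k \<ge> 0")
    case True then show ?thesis using fw[of "nat k"] by simp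
  next
    case False then show ?thesis using bw[of "nat (-k)"] by simp
  qed
  then show ?thesis by (simp add: h_def)
qed

lemma u_vals: "lucas_u y z 0 = 0" "lucas_u y z 1 = 1" "lucas_u y z 2 = y"
  by (simp_all add: lucas_u_def numeral_2_eq_2)
lemma v_vals: "lucas_v y z 0 = 2" "lucas_v y z 1 = y" "lucas_v y z 2 = y^2 - 2*z"
  by (simp_all add: lucas_v_def numeral_2_eq_2 power2_eq_square)

lemma u_rec': "z \<noteq> 0 \<Longrightarrow> lucas_u y z (k + 3) = y * lucas_u y z (k + 2) - z * lucas_u y z (k+1)"
  using u_rec[of z y "k+1"] by (simp add: add.assoc)
lemma v_rec': "z \<noteq> 0 \<Longrightarrow> lucas_v y z (k + 3) = y * lucas_v y z (k + 2) - z * lucas_v y z (k+1)"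
  using v_rec[of z y "k+1"] by (simp add: add.assoc)

lemma I1:
  assumes z: "z \<noteq> 0"
  shows "lucas_v y z (k+1) = y * lucas_u y z (k+1) - 2 * z * lucas_u y z k"
proof (rule rec_unique[OF z, where f = "\<lambda>k. lucas_v y z (k+1)" and g = "\<lambda>k. y * lucas_u y z (k+1) - 2 * z * lucas_u y z k"])
  fix k
  have ee: "k + 2 + 1 = (k::int) + 3" "k + 1 + 1 = k + 2" by simp_all
  show "lucas_v y z (k + 2 + 1) = y * lucas_v y z (k + 1 + 1) - z * lucas_v y z (k + 1)"
    unfolding ee by (rule v_rec'[OF z])
  show "y * lucas_u y z (k + 2 + 1) - 2 * z * lucas_u y z (k + 2) =
     y * (y * lucas_u y z (k + 1 + 1) - 2 * z * lucas_u y z (k + 1)) - z * (y * lucas_u y z (k + 1) - 2 * z * lucas_u y z k)"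
    unfolding ee u_rec'[OF z] u_rec[OF z] by (simp add: algebra_simps)
qed (simp_all add: u_vals v_vals power2_eq_square)

lemma I2:
  assumes z: "z \<noteq> 0"
  shows "y * lucas_v y z (k+1) = (y^2 - 4*z) * lucas_u y z (k+1) + 2 * z * lucas_v y z k"
proof (rule rec_unique[OF z, where f = "\<lambda>k. y * lucas_v y z (k+1)" and g = "\<lambda>k. (y^2 - 4*z) * lucas_u y z (k+1) + 2 * z * lucas_v y z k"])
  fix k
  have ee: "k + 2 + 1 = (k::int) + 3" "k + 1 + 1 = k + 2" by simp_all
  show "y * lucas_v y z (k + 2 + 1) = y * (y * lucas_v y z (k + 1 + 1)) - z * (y * lucas_v y z (k + 1))"
    unfolding ee v_rec'[OF z] by (simp add: algebra_simps)
  show "(y^2 - 4*z) * lucas_u y z (k + 2 + 1) + 2 * z * lucas_v y z (k + 2) =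
     y * ((y^2 - 4*z) * lucas_u y z (k + 1 + 1) + 2 * z * lucas_v y z (k + 1)) - z * ((y^2 - 4*z) * lucas_u y z (k + 1) + 2 * z * lucas_v y z k)"
    unfolding ee u_rec'[OF z] v_rec[OF z] by (simp add: algebra_simps)
qed (simp_all add: u_vals v_vals power2_eq_square algebra_simps)

lemma tele:
  fixes g G :: "int \<Rightarrow> complex"
  assumes "\<And>k. k \<ge> c \<Longrightarrow> g k = G k - x * G (k-1)" and "c \<le> n"
  shows "(\<Sum>k\<in>{c..n}. x ^ nat (n-k) * g k) = G n - x ^ nat (n-c+1) * G (c-1)"
  using assms(2)
proof (induction n rule: int_ge_induct)
  case base then show ?case using assms(1)[of c] by simp
next
  case (step n)
  have ins: "{c..n+1} = insert (n+1) {c..n}" using step by auto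
  have "(\<Sum>k\<in>{c..n}. x ^ nat (n+1-k) * g k) = (\<Sum>k\<in>{c..n}. x * (x ^ nat (n-k) * g k))"
  proof (rule sum.cong)
    fix k assume "k \<in> {c..n}"
    then have "nat (n+1-k) = Suc (nat (n-k))" by auto
    then show "x ^ nat (n+1-k) * g k = x * (x ^ nat (n-k) * g k)" by simp
  qed simp
  also have "\<dots> = x * (G n - x ^ nat (n-c+1) * G (c-1))" using step by (simp add: sum_distrib_left[symmetric])
  finally have S: "(\<Sum>k\<in>{c..n}. x ^ nat (n+1-k) * g k) = x * (G n - x ^ nat (n-c+1) * G (c-1))" .
  have "nat (n + 1 - c + 1) = Suc (nat (n-c+1))" using step by auto
  then show ?case unfolding ins using S assms(1)[of "n+1"] step by (simp add: algebra_simps)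
qed

theorem theorem2:
  fixes y z x r :: complex and c n :: int
  assumes "y \<noteq> 0" and "z \<noteq> 0" and "c \<le> n" and "c < 0 \<longrightarrow> r \<noteq> 0"
  shows "((\<Sum>k\<in>{c..n}. (-1) powi k * x ^ nat (n - k) * r powi k *
            (r * lucas_v y z (k + 1) + (x * y + 2 * r * z) * lucas_u y z k))
         = (-1) powi n * y * r powi (n + 1) * lucas_u y z (n + 1)
           + (-1) powi c * r powi c * y * x ^ nat (n - c + 1) * lucas_u y z c) \<and>
         ((\<Sum>k\<in>{c..n}. (-1) powi k * x ^ nat (n - k) * r powi k *
            ((y^2 - 4 * z) * r * lucas_u y z (k + 1) + (x * y + 2 * r * z) * lucas_v y z k))
         = (-1) powi n * y * r powi (n + 1) * lucas_v y z (n + 1)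
           + (-1) powi c * r powi c * y * x ^ nat (n - c + 1) * lucas_v y z c)"
proof -
  have s: "(-1::complex) powi (k-1) = - ((-1) powi k)" for k
    by (simp add: power_int_diff)
  have rp: "r powi (k+1) = r powi k * r" if "k \<ge> c" for k
    using assms(4) that by (intro power_int_add_1) auto
  let ?u = "lucas_u y z" and ?v = "lucas_v y z"
  define G1 where "G1 k = (-1) powi k * y * r powi (k+1) * ?u (k+1)" for k
  define g1 where "g1 k = (-1) powi k * r powi k * (r * ?v (k + 1) + (x * y + 2 * r * z) * ?u k)" for k
  define G2 where "G2 k = (-1) powi k * y * r powi (k+1) * ?v (k+1)" for k
  define g2 where "g2 k = (-1) powi k * r powi k * ((y^2 - 4 * z) * r * ?u (k + 1) + (x * y + 2 * r * z) * ?v k)" for k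
  have h1: "g1 k = G1 k - x * G1 (k-1)" if "k \<ge> c" for k
    unfolding g1_def G1_def I1[OF assms(2)] s rp[OF that] by (simp add: algebra_simps)
  have h2: "g2 k = G2 k - x * G2 (k-1)" if "k \<ge> c" for k
  proof -
    have "g2 k = (-1) powi k * r powi k * (r * (y * ?v (k+1)) + x * y * ?v k)"
      unfolding g2_def I2[OF assms(2)] by (simp add: algebra_simps)
    then show ?thesis unfolding G2_def s rp[OF that] by (simp add: algebra_simps)
  qed
  have t1: "(\<Sum>k\<in>{c..n}. x ^ nat (n-k) * g1 k) = G1 n - x ^ nat (n-c+1) * G1 (c-1)"
    by (rule tele[of c g1 G1 x n, OF h1 assms(3)])
  have t2: "(\<Sum>k\<in>{c..n}. x ^ nat (n-k) * g2 k) = G2 n - x ^ nat (n-c+1) * G2 (c-1)"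
    by (rule tele[of c g2 G2 x n, OF h2 assms(3)])
  show ?thesis
  proof
    show "(\<Sum>k\<in>{c..n}. (-1) powi k * x ^ nat (n - k) * r powi k *
            (r * lucas_v y z (k + 1) + (x * y + 2 * r * z) * lucas_u y z k))
         = (-1) powi n * y * r powi (n + 1) * lucas_u y z (n + 1)
           + (-1) powi c * r powi c * y * x ^ nat (n - c + 1) * lucas_u y z c"
      using t1 unfolding g1_def G1_def s by (simp add: algebra_simps)
    show "(\<Sum>k\<in>{c..n}. (-1) powi k * x ^ nat (n - k) * r powi k *
            ((y^2 - 4 * z) * r * lucas_u y z (k + 1) + (x * y + 2 * r * z) * lucas_v y z k))
         = (-1) powi n * y * r powi (n + 1) * lucas_v y z (n + 1)
           + (-1) powi c * r powi c * y * x ^ nat (n - c + 1) * lucas_v y z c"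
      using t2 unfolding g2_def G2_def s by (simp add: algebra_simps)
  qed
qed
end
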